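(* Let $\Sigma$ be an alphabet with $|\Sigma|\ge 3$ and $f\colon\Sigma^*\to\Sigma^*$ RCP. Then exactly one of the following holds: ($C_1$) there exists $b\in\Sigma$ such that $f(x)\in b\Sigma^*$ for all $x\in\Sigma^*$; ($C_2$) $f(x)\in x\Sigma^*$ for all $x\in\Sigma^*$; ($C_3$) $f(x)=\varepsilon$ for all $x\in\Sigma^*$.
   Context: $\Sigma^*$ is the free monoid over $\Sigma$ (finite words, concatenation, empty word $\varepsilon$). For a word $w$, $w\Sigma^*$ denotes the set of words having $w$ as a prefix. A function $f\colon(\Sigma^* )^k\to\Sigma^*$ is RCP if for every monoid morphism $\varphi\colon\Sigma^*\to\Sigma^*$ and all $u_1,\ldots,u_k,v_1,\ldots,v_k$ with $\varphi(u_i)=\varphi(v_i)$ for all $i$, we have $\varphi(f(u_1,\ldots,u_k))=\varphi(f(v_1,\ldots,v_k))$. *)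

theory Defs
  imports Main
begin

text \<open>Words over the alphabet 'a are lists. A monoid morphism of the free monoid
  is determined by the images of the letters: it is concat of map h.\<close>

definition is_monoid_morphism :: "('a list \<Rightarrow> 'a list) \<Rightarrow> bool" where
  "is_monoid_morphism \<phi> \<longleftrightarrow> \<phi> [] = [] \<and> (\<forall>u v. \<phi> (u @ v) = \<phi> u @ \<phi> v)"

text \<open>RCP for unary functions (k = 1).\<close>
definition RCP :: "('a list \<Rightarrow> 'a list) \<Rightarrow> bool" where
  "RCP f \<longleftrightarrow> (\<forall>\<phi> u v. is_monoid_morphism \<phi> \<longrightarrow> \<phi> u = \<phi> v \<longrightarrow> \<phi> (f u) = \<phi> (f v))"

end

theory Submission
  imports Defs
begin

definition sub :: "'a \<Rightarrow> 'a list \<Rightarrow> 'a list \<Rightarrow> 'a list" where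
  "sub a y w = concat (map (\<lambda>z. if z = a then y else [z]) w)"

lemma mm_sub: "is_monoid_morphism (sub a y)"
  by (simp add: is_monoid_morphism_def sub_def)

lemma mm_filter: "is_monoid_morphism (filter P)"
  by (simp add: is_monoid_morphism_def)

lemma mm_map: "is_monoid_morphism (map g)"
  by (simp add: is_monoid_morphism_def)

lemma sub_id: "a \<notin> set w \<Longrightarrow> sub a y w = w"
  by (induction w) (auto simp: sub_def)

lemma sub_append: "sub a y (u @ v) = sub a y u @ sub a y v"
  by (simp add: sub_def)

lemma sub_Cons: "sub a y (c # w) = (if c = a then y else [c]) @ sub a y w"
  by (simp add: sub_def)

lemma sub_Nil[simp]: "sub a y [] = []"
  by (simp add: sub_def)

lemma sub_nil: "sub a y w = [] \<Longrightarrow> \<forall>c\<in>set w. c = a"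
  by (induction w) (auto simp: sub_Cons split: if_split_asm)

lemma prefix_pairs:
  "(\<forall>u v. \<exists>s. filter (\<lambda>z. z = u \<or> z = v) zs = filter (\<lambda>z. z = u \<or> z = v) x @ s)
   \<Longrightarrow> \<exists>s. zs = x @ s"
proof (induction x arbitrary: zs)
  case Nil
  then show ?case by simp
next
  case (Cons c x')
  from Cons.prems[rule_format, of c c] obtain s where
    "filter (\<lambda>z. z = c) zs = c # filter (\<lambda>z. z = c) x' @ s" by auto
  then have "zs \<noteq> []" by auto
  then obtain e z' where zs: "zs = e # z'" by (cases zs) auto
  have "e = c"
  proof (rule ccontr)
    assume ne: "e \<noteq> c"
    from Cons.prems[rule_format, of c e] obtain s where
      "filter (\<lambda>z. z = c \<or> z = e) zs = filter (\<lambda>z. z = c \<or> z = e) (c # x') @ s" by blast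
    with zs ne show False by simp
  qed
  have "\<forall>u v. \<exists>s. filter (\<lambda>z. z = u \<or> z = v) z' = filter (\<lambda>z. z = u \<or> z = v) x' @ s"
  proof (intro allI)
    fix u v
    from Cons.prems[rule_format, of u v] obtain s where
      "filter (\<lambda>z. z = u \<or> z = v) zs = filter (\<lambda>z. z = u \<or> z = v) (c # x') @ s" by blast
    with zs \<open>e = c\<close> show "\<exists>s. filter (\<lambda>z. z = u \<or> z = v) z' = filter (\<lambda>z. z = u \<or> z = v) x' @ s"
      by (auto split: if_splits)
  qed
  from Cons.IH[OF this] zs \<open>e = c\<close> show ?case by auto
qed

context
  fixes f :: "'a::finite list \<Rightarrow> 'a list"
  assumes rcp: "RCP f" and card3: "card (UNIV :: 'a set) \<ge> 3"
begin

lemma other: "\<exists>w::'a. w \<noteq> u \<and> w \<noteq> v"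
proof (rule ccontr)
  assume "\<not> ?thesis"
  then have "UNIV \<subseteq> {u, v}" by auto
  then have "card (UNIV :: 'a set) \<le> card {u, v}" by (simp add: card_mono)
  also have "\<dots> \<le> 2" by (simp add: card_insert_le_m1)
  finally show False using card3 by simp
qed

lemma R: "is_monoid_morphism \<phi> \<Longrightarrow> \<phi> u = \<phi> v \<Longrightarrow> \<phi> (f u) = \<phi> (f v)"
  using rcp unfolding RCP_def by blast

lemma subst_eq: "a \<notin> set y \<Longrightarrow> sub a y (f [a]) = sub a y (f y)"
  by (rule R[OF mm_sub]) (simp add: sub_id sub_Cons)

lemma proj_eq: "filter P (f x) = filter P (f (filter P x))"
  by (rule R[OF mm_filter]) simp

lemma merge_eq: "map (\<lambda>z. if z = a then c else z) (f [a]) = map (\<lambda>z. if z = a then c else z) (f [c])"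
  by (rule R[OF mm_map]) simp

lemma T0:
  assumes a0: "f [a0] = []"
  shows "f x = []"
proof -
  have all: "f [a] = []" for a
    using arg_cong[OF merge_eq[of a a0], of length] a0 by simp
  show ?thesis
  proof (rule ccontr)
    assume "f x \<noteq> []"
    then obtain z where z: "z \<in> set (f x)" by (cases "f x") auto
    define y where "y = filter (\<lambda>w. w = z) x"
    obtain a' :: 'a where a': "a' \<noteq> z" using other by blast
    have "a' \<notin> set y" using a' by (simp add: y_def)
    from subst_eq[OF this] all have "sub a' y (f y) = []" by simp
    from sub_nil[OF this] a' have "z \<notin> set (f y)" by auto
    then have "filter (\<lambda>w. w = z) (f y) = []" by (auto simp: filter_empty_conv)
    moreover have "filter (\<lambda>w. w = z) (f x) \<noteq> []" using z by (simp add: filter_empty_conv)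
    ultimately show False using proj_eq[of "\<lambda>w. w = z" x] by (simp add: y_def)
  qed
qed

lemma classify:
  assumes ne: "\<forall>a. f [a] \<noteq> []"
  shows "(\<forall>a. hd (f [a]) = a) \<or> (\<exists>b. \<forall>a. hd (f [a]) = b)"
proof -
  define h where "h a = hd (f [a])" for a
  have m: "(if h a = a then c else h a) = (if h c = a then c else h c)" for a c
  proof -
    have 1: "hd (map (\<lambda>z. if z = a then c else z) (f [a])) = hd (map (\<lambda>z. if z = a then c else z) (f [c]))"
      using merge_eq[of a c] by simp
    from 1 show ?thesis
      unfolding h_def hd_map[OF ne[rule_format, of a]] hd_map[OF ne[rule_format, of c]] .
  qed
  show ?thesis
  proof (cases "\<forall>a. h a = a")
    case True
    then show ?thesis by (simp add: h_def)
  next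
    case False
    then obtain a0 where a0: "h a0 \<noteq> a0" by blast
    define b where "b = h a0"
    have gen: "h c = b" if "c \<noteq> b" for c
    proof (cases "c = a0")
      case True then show ?thesis by (simp add: b_def)
    next
      case False
      from m[of a0 c] a0 that show ?thesis unfolding b_def by (auto split: if_splits)
    qed
    have "h b = b"
    proof -
      obtain e where e: "e \<noteq> a0" "e \<noteq> b" using other by blast
      have he: "h e = b" using gen e by simp
      from m[of b e] he have 1: "h b = b \<or> h b = e" by (auto split: if_splits)
      from m[of a0 b] a0 have 2: "h b = b \<or> h b = a0" unfolding b_def by (auto split: if_splits)
      from 1 2 e show ?thesis by auto
    qed
    with gen have "\<forall>a. h a = b" by metis
    then show ?thesis by (auto simp: h_def)
  qed
qed

lemma T1a:
  assumes hb: "\<forall>a. \<exists>s. f [a] = b # s" and a: "a \<notin> set y" "a \<noteq> b"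
  shows "\<exists>c s. f y = c # s \<and> (c = a \<or> c = b)"
proof -
  obtain s where s: "f [a] = b # s" using hb by blast
  have eq: "sub a y (f y) = b # sub a y s"
    using subst_eq[OF a(1)] s a(2) by (simp add: sub_Cons)
  show ?thesis
  proof (cases "f y")
    case Nil
    with eq show ?thesis by simp
  next
    case (Cons c t)
    with eq have "(if c = a then y else [c]) @ sub a y t = b # sub a y s" by (simp add: sub_Cons)
    then have "c = a \<or> c = b" by (auto split: if_splits)
    with Cons show ?thesis by blast
  qed
qed

lemma T1b:
  assumes hb: "\<forall>a. \<exists>s. f [a] = b # s" and a: "a \<notin> set y" "a \<noteq> b"
  shows "\<exists>s. f y = b # s"
proof -
  obtain c t where ct: "f y = c # t" "c = a \<or> c = b" using T1a[OF assms] by blast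
  show ?thesis
  proof (cases "c = b")
    case True
    with ct show ?thesis by blast
  next
    case False
    with ct have ca: "c = a" by simp
    define P where "P = (\<lambda>z. z = a \<or> z = b)"
    define yb where "yb = filter P y"
    obtain a'' where a'': "a'' \<noteq> a" "a'' \<noteq> b" using other by blast
    have n1: "a \<notin> set yb" and n2: "a'' \<notin> set yb" using a(1) a'' by (auto simp: yb_def P_def)
    obtain c1 s1 where 1: "f yb = c1 # s1" "c1 = a \<or> c1 = b" using T1a[OF hb n1 a(2)] by blast
    obtain c2 s2 where 2: "f yb = c2 # s2" "c2 = a'' \<or> c2 = b" using T1a[OF hb n2 a''(2)] by blast
    from 1 2 a'' have "c1 = b" by auto
    with 1 have "filter P (f yb) = b # filter P s1" by (simp add: P_def)
    moreover have "filter P (f y) = a # filter P t" using ct ca by (simp add: P_def)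
    ultimately have False using proj_eq[of P y] a(2) by (simp add: yb_def)
    then show ?thesis ..
  qed
qed

lemma T1:
  assumes hb: "\<forall>a. \<exists>s. f [a] = b # s"
  shows "\<exists>s. f x = b # s"
proof (cases "f x")
  case Nil
  define P where "P = (\<lambda>z. z = b)"
  obtain a' where a': "a' \<noteq> b" using other by blast
  have "a' \<notin> set (filter P x)" using a' by (auto simp: P_def)
  from T1b[OF hb this a'] obtain s where "f (filter P x) = b # s" by blast
  then have "filter P (f (filter P x)) \<noteq> []" by (simp add: P_def)
  with proj_eq[of P x] Nil have False by simp
  then show ?thesis ..
next
  case (Cons h t)
  show ?thesis
  proof (cases "h = b")
    case True with Cons show ?thesis by blast
  next
    case False
    define P where "P = (\<lambda>z. z = b \<or> z = h)"
    obtain a' where a': "a' \<noteq> b" "a' \<noteq> h" using other by blast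
    have "a' \<notin> set (filter P x)" using a' by (auto simp: P_def)
    from T1b[OF hb this a'(1)] obtain s where "f (filter P x) = b # s" by blast
    then have "filter P (f (filter P x)) = b # filter P s" by (simp add: P_def)
    moreover have "filter P (f x) = h # filter P t" using Cons by (simp add: P_def)
    ultimately have False using proj_eq[of P x] False by simp
    then show ?thesis ..
  qed
qed

lemma T2a:
  assumes ha: "\<forall>a. \<exists>s. f [a] = a # s" and a: "a \<notin> set y"
  shows "(\<exists>s. f y = y @ s) \<or> (\<exists>p q r. f y = p @ a # q \<and> a \<notin> set p \<and> y = p @ r \<and> r \<noteq> [])"
proof -
  obtain s where s: "f [a] = a # s" using ha by blast
  have eq: "sub a y (f y) = y @ sub a y s" using subst_eq[OF a] s by (simp add: sub_Cons)
  show ?thesis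
  proof (cases "a \<in> set (f y)")
    case False
    then have "sub a y (f y) = f y" by (rule sub_id)
    with eq show ?thesis by auto
  next
    case True
    then obtain p q where pq: "f y = p @ a # q" "a \<notin> set p" using split_list_first by metis
    have "p @ (y @ sub a y q) = y @ sub a y s" using eq pq by (simp add: sub_append sub_Cons sub_id)
    then obtain us where us: "(p = y @ us \<and> us @ y @ sub a y q = sub a y s) \<or> (p @ us = y \<and> y @ sub a y q = us @ sub a y s)"
      unfolding append_eq_append_conv2 by blast
    then show ?thesis
    proof
      assume "p = y @ us \<and> us @ y @ sub a y q = sub a y s"
      then have "f y = y @ (us @ a # q)" using pq by simp
      then show ?thesis by blast
    next
      assume H: "p @ us = y \<and> y @ sub a y q = us @ sub a y s"
      show ?thesis
      proof (cases "us = []")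
        case True
        with H pq have "f y = y @ a # q" by simp
        then show ?thesis by blast
      next
        case False
        with H pq show ?thesis by blast
      qed
    qed
  qed
qed

lemma T2b:
  assumes ha: "\<forall>a. \<exists>s. f [a] = a # s" and a: "a \<notin> set y" "a' \<notin> set y" "a \<noteq> a'"
  shows "\<exists>s. f y = y @ s"
proof (rule ccontr)
  assume n: "\<not> ?thesis"
  from T2a[OF ha a(1)] n obtain p q r where 1: "f y = p @ a # q" "y = p @ r" by blast
  from T2a[OF ha a(2)] n obtain p' q' r' where 2: "f y = p' @ a' # q'" "y = p' @ r'" by blast
  from 1 2 have "p @ a # q = p' @ a' # q'" by simp
  then obtain us where "(p = p' @ us \<and> us @ a # q = a' # q') \<or> (p @ us = p' \<and> a # q = us @ a' # q')"
    unfolding append_eq_append_conv2 by blast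
  then show False
  proof
    assume H: "p = p' @ us \<and> us @ a # q = a' # q'"
    show False
    proof (cases us)
      case Nil with H a(3) show False by simp
    next
      case (Cons u us')
      with H have "a' \<in> set p" by auto
      with 1(2) a(2) show False by simp
    qed
  next
    assume H: "p @ us = p' \<and> a # q = us @ a' # q'"
    show False
    proof (cases us)
      case Nil with H a(3) show False by simp
    next
      case (Cons u us')
      with H have "a \<in> set p'" by auto
      with 2(2) a(1) show False by simp
    qed
  qed
qed

lemma T2c:
  assumes ha: "\<forall>a. \<exists>s. f [a] = a # s" and a: "a \<notin> set y"
  shows "\<exists>s. f y = y @ s"
proof (rule ccontr)
  assume n: "\<not> ?thesis"
  from T2a[OF ha a] n obtain p q r where 1: "f y = p @ a # q" "a \<notin> set p" "y = p @ r" "r \<noteq> []" by blast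
  then obtain d r' where r: "r = d # r'" by (cases r) auto
  have da: "d \<noteq> a" using a 1(3) r by auto
  define P where "P = (\<lambda>z. z = a \<or> z = d)"
  define yd where "yd = filter P y"
  obtain a'' where a'': "a'' \<noteq> a" "a'' \<noteq> d" using other by blast
  have n1: "a \<notin> set yd" and n2: "a'' \<notin> set yd" using a a'' by (auto simp: yd_def P_def)
  from T2b[OF ha n1 n2 a''(1)[symmetric]] obtain s where s: "f yd = yd @ s" by blast
  have e0: "filter P (f y) = filter P (f yd)" unfolding yd_def by (rule proj_eq)
  have e1: "filter P (f y) = filter P p @ a # filter P q" using 1(1) by (simp add: P_def)
  have e2: "filter P yd = yd" by (simp add: yd_def)
  have e3: "yd = filter P p @ d # filter P r'" using 1(3) r by (simp add: yd_def P_def)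
  have e4: "filter P (f yd) = yd @ filter P s" using s e2 by simp
  from e0 e1 e4 e3 have "filter P p @ a # filter P q = filter P p @ d # filter P r' @ filter P s"
    by simp
  then show False using da by simp
qed

lemma T2:
  assumes ha: "\<forall>a. \<exists>s. f [a] = a # s"
  shows "\<exists>s. f x = x @ s"
proof (rule prefix_pairs, intro allI)
  fix u v :: 'a
  define P where "P = (\<lambda>z. z = u \<or> z = v)"
  obtain a where "a \<noteq> u" "a \<noteq> v" using other by blast
  then have "a \<notin> set (filter P x)" by (auto simp: P_def)
  from T2c[OF ha this] obtain s where "f (filter P x) = filter P x @ s" by blast
  then have "filter P (f x) = filter P x @ filter P s" using proj_eq[of P x] by simp
  then show "\<exists>s. filter (\<lambda>z. z = u \<or> z = v) (f x) = filter (\<lambda>z. z = u \<or> z = v) x @ s"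
    by (auto simp: P_def)
qed

end

theorem mainTheorem10:
  fixes f :: "'a::finite list \<Rightarrow> 'a list"
  assumes "card (UNIV :: 'a set) \<ge> 3"
    and "RCP f"
  defines "C1 \<equiv> (\<exists>b. \<forall>x. \<exists>s. f x = b # s)"
    and "C2 \<equiv> (\<forall>x. \<exists>s. f x = x @ s)"
    and "C3 \<equiv> (\<forall>x. f x = [])"
  shows "(C1 \<and> \<not> C2 \<and> \<not> C3) \<or> (\<not> C1 \<and> C2 \<and> \<not> C3) \<or> (\<not> C1 \<and> \<not> C2 \<and> C3)"
proof -
  have nC1C2: "\<not> (C1 \<and> C2)"
  proof
    assume "C1 \<and> C2"
    then obtain b where b: "\<forall>x. \<exists>s. f x = b # s" and c2: "\<forall>x. \<exists>s. f x = x @ s"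
      unfolding C1_def C2_def by blast
    obtain c :: 'a where c: "c \<noteq> b" using other[OF assms(2,1), of b b] by blast
    from b c2 obtain s t where "f [c] = b # s" "f [c] = [c] @ t" by blast
    with c show False by simp
  qed
  have nC1C3: "\<not> (C1 \<and> C3)" unfolding C1_def C3_def by force
  have nC2C3: "\<not> (C2 \<and> C3)"
  proof
    assume "C2 \<and> C3"
    then obtain t where "f [undefined] = [undefined] @ t" "f [undefined] = []"
      unfolding C2_def C3_def by blast
    then show False by simp
  qed
  have "C1 \<or> C2 \<or> C3"
  proof (cases "\<exists>a. f [a] = []")
    case True
    then obtain a0 where "f [a0] = []" by blast
    then have C3 using T0[OF assms(2,1)] unfolding C3_def by blast
    then show ?thesis by simp
  next
    case False
    then have ne: "\<forall>a. f [a] \<noteq> []" by simp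
    from classify[OF assms(2,1) ne] show ?thesis
    proof
      assume "\<forall>a. hd (f [a]) = a"
      then have "\<forall>a. \<exists>s. f [a] = a # s" using ne by (metis list.collapse)
      from T2[OF assms(2,1) this] have C2 unfolding C2_def by blast
      then show ?thesis by simp
    next
      assume "\<exists>b. \<forall>a. hd (f [a]) = b"
      then obtain b where "\<forall>a. hd (f [a]) = b" ..
      then have "\<forall>a. \<exists>s. f [a] = b # s" using ne by (metis list.collapse)
      from T1[OF assms(2,1) this] have C1 unfolding C1_def by blast
      then show ?thesis by simp
    qed
  qed
  then show ?thesis using nC1C2 nC1C3 nC2C3 by blast
qed

end
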